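(* Let $\omega\in\mathcal C(\mathbb Z)$ satisfy $\omega*\omega=\omega$. Then the map $p_\omega:\beta\mathbb Z\to\mathcal R(p_\omega)$ is a $\mathbb Z$-retraction of $\beta\mathbb Z$ onto the proper subset $\mathcal R(p_\omega)=p_\omega(\beta\mathbb Z)$. Consequently the map $\pi_\omega: C(\beta\mathbb Z)\to C(\beta\mathbb Z)$, $\pi_\omega(f)=f\circ p_\omega$, is a $\mathbb Z$-equivariant idempotent $*$-homomorphism onto a proper subalgebra, with $\sigma(\pi_\omega)=\mathbb T$.
   Context: $\beta\mathbb Z$ is the Stone–Čech compactification of $\mathbb Z$, $\mathcal C(\mathbb Z)=\beta\mathbb Z\setminus\mathbb Z$. Let $\varphi$ be the homeomorphism of $\beta\mathbb Z$ extending $k\mapsto k+1$; $\mathbb Z$ acts on $\beta\mathbb Z$ by $m\cdot q=\varphi^{(m)}(q)$ and on $C(\beta\mathbb Z)\cong\ell^\infty(\mathbb Z)$ by $f\mapsto f(m\cdot\,\cdot)$. For $\omega\in\beta\mathbb Z$, $p_\omega$ is the unique continuous extension of $k\mapsto\varphi^{(k)}(\omega)$ to $\beta\mathbb Z$, and $\omega*q=p_\omega(q)$. A $\mathbb Z$-retraction onto a closed invariant set $Y$ is a continuous equivariant surjection $\gamma:\beta\mathbb Z\to Y$ fixing $Y$ pointwise. For a $\mathbb Z$-equivariant linear map $\pi$ and $x_\lambda=(\lambda^n)_n$, $\pi(x_\lambda)=c_\lambda x_\lambda$ and $\sigma(\pi)=\{\lambda\in\mathbb T:c_\lambda\neq0\}$.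 *)

theory Defs
  imports "HOL-Analysis.Analysis"
begin

text \<open>beta Z modelled as the space of ultrafilters on int (as sets of subsets of int),
with the Stone topology generated by the basic clopen sets {U. A in U}.\<close>

definition is_ultra :: "int set set \<Rightarrow> bool" where
  "is_ultra U \<longleftrightarrow> {} \<notin> U \<and> UNIV \<in> U \<and>
     (\<forall>A B. A \<in> U \<and> B \<in> U \<longrightarrow> A \<inter> B \<in> U) \<and>
     (\<forall>A B. A \<in> U \<and> A \<subseteq> B \<longrightarrow> B \<in> U) \<and>
     (\<forall>A. A \<in> U \<or> - A \<in> U)"

definition betaZ_set :: "int set set set" where
  "betaZ_set = {U. is_ultra U}"

definition betaZ :: "int set set topology" where
  "betaZ = topology_generated_by {{U \<in> betaZ_set. A \<in> U} | A. True}"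

definition pr :: "int \<Rightarrow> int set set" where
  "pr k = {A. k \<in> A}"

definition corona :: "int set set set" where
  "corona = betaZ_set - range pr"

text \<open>The Z-action m . q = phi^(m)(q), where phi extends k |-> k+1; concretely the
  pushforward of q under k |-> k+m (the Stone-Cech extension of k |-> k + m).\<close>
definition act :: "int \<Rightarrow> int set set \<Rightarrow> int set set" where
  "act m q = {A. (\<lambda>k. k + m) -` A \<in> q}"

definition p_om :: "int set set \<Rightarrow> int set set \<Rightarrow> int set set" where
  "p_om \<omega> = (THE g. continuous_map betaZ betaZ g \<and> (\<forall>k. g (pr k) = act k \<omega>)
                 \<and> (\<forall>q. q \<notin> betaZ_set \<longrightarrow> g q = undefined))"

definition star :: "int set set \<Rightarrow> int set set \<Rightarrow> int set set" (infixl "\<star>" 70) where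
  "\<omega> \<star> q = p_om \<omega> q"

definition Z_retraction :: "(int set set \<Rightarrow> int set set) \<Rightarrow> int set set set \<Rightarrow> bool" where
  "Z_retraction \<gamma> Y \<longleftrightarrow> Y \<subseteq> betaZ_set \<and> closedin betaZ Y \<and> (\<forall>m. act m ` Y \<subseteq> Y) \<and>
     continuous_map betaZ (subtopology betaZ Y) \<gamma> \<and> \<gamma> ` betaZ_set = Y \<and>
     (\<forall>m. \<forall>q\<in>betaZ_set. \<gamma> (act m q) = act m (\<gamma> q)) \<and>
     (\<forall>y\<in>Y. \<gamma> y = y)"

text \<open>C(beta Z), complex valued continuous functions (values off beta Z are irrelevant).\<close>
definition CbZ :: "(int set set \<Rightarrow> complex) set" where
  "CbZ = {f. continuous_map betaZ euclidean f}"

definition xhat :: "complex \<Rightarrow> int set set \<Rightarrow> complex" where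
  "xhat l = (THE f. continuous_map betaZ euclidean f \<and> (\<forall>n. f (pr n) = l powi n)
                 \<and> (\<forall>q. q \<notin> betaZ_set \<longrightarrow> f q = 0))"

definition sigma_map :: "((int set set \<Rightarrow> complex) \<Rightarrow> (int set set \<Rightarrow> complex)) \<Rightarrow> complex set" where
  "sigma_map \<pi> = {l. norm l = 1 \<and>
     (\<exists>c. c \<noteq> 0 \<and> (\<forall>q\<in>betaZ_set. \<pi> (xhat l) q = c * xhat l q))}"

end

theory Submission imports Defs begin

lemma ultra_int: "U \<in> betaZ_set \<Longrightarrow> A \<in> U \<Longrightarrow> B \<in> U \<Longrightarrow> A \<inter> B \<in> U"
  by (auto simp: betaZ_set_def is_ultra_def)
lemma ultra_mono: "U \<in> betaZ_set \<Longrightarrow> A \<in> U \<Longrightarrow> A \<subseteq> B \<Longrightarrow> B \<in> U"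
  by (auto simp: betaZ_set_def is_ultra_def)
lemma ultra_empty: "U \<in> betaZ_set \<Longrightarrow> {} \<notin> U"
  by (auto simp: betaZ_set_def is_ultra_def)
lemma ultra_UNIV: "U \<in> betaZ_set \<Longrightarrow> UNIV \<in> U"
  by (auto simp: betaZ_set_def is_ultra_def)
lemma ultra_compl: "U \<in> betaZ_set \<Longrightarrow> (- A \<in> U) \<longleftrightarrow> A \<notin> U"
proof -
  assume U: "U \<in> betaZ_set"
  show ?thesis
  proof
    assume "- A \<in> U"
    show "A \<notin> U"
    proof
      assume "A \<in> U"
      then have "{} \<in> U" using ultra_int[OF U, of "-A" A] \<open>- A \<in> U\<close> by auto
      then show False using ultra_empty[OF U] by auto
    qed
  next
    assume "A \<notin> U" then show "- A \<in> U" using U by (auto simp: betaZ_set_def is_ultra_def)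
  qed
qed
lemma ultra_ne: "U \<in> betaZ_set \<Longrightarrow> A \<in> U \<Longrightarrow> \<exists>k. k \<in> A"
  using ultra_empty by (metis ex_in_conv)

lemma ultraI:
  assumes "{} \<notin> U" "UNIV \<in> U" "\<And>A B. A \<in> U \<Longrightarrow> B \<in> U \<Longrightarrow> A \<inter> B \<in> U"
    "\<And>A B. A \<in> U \<Longrightarrow> A \<subseteq> B \<Longrightarrow> B \<in> U" "\<And>A. A \<notin> U \<Longrightarrow> - A \<in> U"
  shows "U \<in> betaZ_set"
  using assms unfolding betaZ_set_def is_ultra_def by blast

lemma pr_in: "pr k \<in> betaZ_set"
  by (rule ultraI) (auto simp: pr_def)

lemma act_in: "q \<in> betaZ_set \<Longrightarrow> act m q \<in> betaZ_set"
  unfolding act_def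
  apply (rule ultraI)
  using ultra_empty ultra_UNIV ultra_int ultra_mono ultra_compl
  apply (auto simp: vimage_Int[symmetric] vimage_Compl[symmetric] simp del: vimage_Int vimage_Compl)
  apply (metis vimage_Int)
  apply (meson ultra_mono vimage_mono)
  by (metis vimage_Compl)

lemma act_pr: "act m (pr n) = pr (n + m)"
  by (auto simp: act_def pr_def)

definition basic :: "int set \<Rightarrow> int set set set" where
  "basic A = {U \<in> betaZ_set. A \<in> U}"

lemma topspace_betaZ [simp]: "topspace betaZ = betaZ_set"
  unfolding betaZ_def topology_generated_by_topspace
  using ultra_UNIV by blast

lemma open_basic: "openin betaZ (basic A)"
  unfolding betaZ_def basic_def
  by (rule topology_generated_by_Basis) blast

lemma open_local:
  assumes "openin betaZ W" "q \<in> W" "q \<in> betaZ_set"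
  shows "\<exists>B\<in>q. basic B \<subseteq> W"
proof -
  have "generate_topology_on {{U \<in> betaZ_set. A \<in> U} | A. True} W"
    using assms(1) unfolding betaZ_def openin_topology_generated_by_iff .
  then show ?thesis using assms(2,3)
  proof (induction arbitrary: q)
    case Empty then show ?case by simp
  next
    case (Int a b)
    then obtain B1 B2 where "B1 \<in> q" "basic B1 \<subseteq> a" "B2 \<in> q" "basic B2 \<subseteq> b" by blast
    moreover have "q \<in> betaZ_set" using Int.prems by blast
    ultimately show ?case
      apply (intro bexI[of _ "B1 \<inter> B2"])
      by (auto simp: basic_def ultra_int intro: ultra_mono) 
  next
    case (UN K) then show ?case by blast
  next
    case (Basis s) then show ?case by (auto simp: basic_def)
  qed
qed


lemma open_betaZI:
  assumes "W \<subseteq> betaZ_set" "\<And>q. q \<in> W \<Longrightarrow> \<exists>B\<in>q. basic B \<subseteq> W"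
  shows "openin betaZ W"
  apply (subst openin_subopen)
  using assms open_basic unfolding basic_def by blast

lemma Hausdorff_betaZ: "Hausdorff_space betaZ"
  unfolding Hausdorff_space_def
proof (intro allI impI)
  fix x y assume a: "x \<in> topspace betaZ \<and> y \<in> topspace betaZ \<and> x \<noteq> y"
  then have x: "x \<in> betaZ_set" and y: "y \<in> betaZ_set" by auto
  obtain A where "A \<in> x" "A \<notin> y"
  proof -
    from a obtain A where "A \<in> x \<and> A \<notin> y \<or> A \<in> y \<and> A \<notin> x" by blast
    then show thesis
      using that ultra_compl[OF x, of A] ultra_compl[OF y, of A] by auto
  qed
  then have "-A \<in> y" using ultra_compl[OF y] by auto
  show "\<exists>U V. openin betaZ U \<and> openin betaZ V \<and> x \<in> U \<and> y \<in> V \<and> disjnt U V"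
    apply (rule exI[of _ "basic A"], rule exI[of _ "basic (-A)"])
    using open_basic \<open>A \<in> x\<close> \<open>-A \<in> y\<close> x y ultra_compl
    by (auto simp: basic_def disjnt_def)
qed

lemma density:
  assumes "Hausdorff_space Y" "continuous_map betaZ Y f" "continuous_map betaZ Y g"
    "\<And>k. f (pr k) = g (pr k)" "q \<in> betaZ_set"
  shows "f q = g q"
proof (rule ccontr)
  assume ne: "f q \<noteq> g q"
  have "f q \<in> topspace Y" "g q \<in> topspace Y"
    using assms(2,3,5) by (auto simp: continuous_map_def)
  then obtain U V where UV: "openin Y U" "openin Y V" "f q \<in> U" "g q \<in> V" "disjnt U V"
    using assms(1) ne unfolding Hausdorff_space_def by blast
  define W where "W = {x \<in> topspace betaZ. f x \<in> U} \<inter> {x \<in> topspace betaZ. g x \<in> V}"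
  have "openin betaZ W" unfolding W_def
    using assms(2,3) UV by (intro openin_Int) (auto simp: continuous_map_def)
  moreover have "q \<in> W" using UV assms(5) by (auto simp: W_def)
  ultimately obtain B where "B \<in> q" "basic B \<subseteq> W" using open_local assms(5) by blast
  then obtain k where "k \<in> B" using ultra_ne assms(5) by blast
  then have "pr k \<in> W" using \<open>basic B \<subseteq> W\<close> pr_in by (auto simp: basic_def pr_def)
  then show False using assms(4)[of k] UV(5) by (auto simp: W_def disjnt_def)
qed

lemma cont_betaZI:
  assumes "\<And>q. q \<in> betaZ_set \<Longrightarrow> f q \<in> betaZ_set"
    "\<And>A. openin betaZ {q \<in> betaZ_set. A \<in> f q}"
  shows "continuous_map betaZ betaZ f"
  unfolding continuous_map_def
proof (intro conjI allI impI)
  show "f \<in> topspace betaZ \<rightarrow> topspace betaZ" using assms(1) by auto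
  fix U assume U: "openin betaZ U"
  show "openin betaZ {x \<in> topspace betaZ. f x \<in> U}"
  proof (subst openin_subopen, intro ballI)
    fix x assume x: "x \<in> {x \<in> topspace betaZ. f x \<in> U}"
    then obtain B where "B \<in> f x" "basic B \<subseteq> U" using open_local[OF U, of "f x"] assms(1) by auto
    then show "\<exists>T. openin betaZ T \<and> x \<in> T \<and> T \<subseteq> {x \<in> topspace betaZ. f x \<in> U}"
      using x assms by (intro exI[of _ "{q \<in> betaZ_set. B \<in> f q}"]) (auto simp: basic_def)
  qed
qed

lemma act_cont: "continuous_map betaZ betaZ (act m)"
proof (rule cont_betaZI)
  fix A
  have "{q \<in> betaZ_set. A \<in> act m q} = basic ((\<lambda>k. k + m) -` A)"
    by (auto simp: basic_def act_def)
  then show "openin betaZ {q \<in> betaZ_set. A \<in> act m q}" using open_basic by simp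
qed (rule act_in)


definition sh :: "int set \<Rightarrow> int \<Rightarrow> int set" where
  "sh A k = (\<lambda>j. j + k) -` A"

definition Pw :: "int set set \<Rightarrow> int set set \<Rightarrow> int set set" where
  "Pw w q = (if q \<in> betaZ_set then {A. {k. sh A k \<in> w} \<in> q} else undefined)"

lemma Pw_in:
  assumes w: "w \<in> betaZ_set" and q: "q \<in> betaZ_set"
  shows "Pw w q \<in> betaZ_set"
proof -
  have s1: "sh (A \<inter> B) k = sh A k \<inter> sh B k" for A B k by (auto simp: sh_def)
  have s2: "sh (- A) k = - sh A k" for A k by (auto simp: sh_def)
  have s3: "sh {} k = {}" "sh UNIV k = UNIV" for k by (auto simp: sh_def)
  have s5: "A \<subseteq> B \<Longrightarrow> sh A k \<subseteq> sh B k" for A B k by (auto simp: sh_def)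
  have e1: "{k. sh (A \<inter> B) k \<in> w} = {k. sh A k \<in> w} \<inter> {k. sh B k \<in> w}" for A B
  proof -
    have "sh (A \<inter> B) k \<in> w \<longleftrightarrow> sh A k \<in> w \<and> sh B k \<in> w" for k
      unfolding s1 using ultra_int[OF w] ultra_mono[OF w] by (metis Int_lower1 Int_lower2)
    then show ?thesis by blast
  qed
  have e2: "{k. sh (- A) k \<in> w} = - {k. sh A k \<in> w}" for A
    unfolding s2 using ultra_compl[OF w] by blast
  have e3: "{k. sh {} k \<in> w} = {}" unfolding s3 using ultra_empty[OF w] by blast
  have e4: "{k. sh UNIV k \<in> w} = UNIV" unfolding s3 using ultra_UNIV[OF w] by blast
  have e5: "A \<subseteq> B \<Longrightarrow> {k. sh A k \<in> w} \<subseteq> {k. sh B k \<in> w}" for A B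
    using ultra_mono[OF w _ s5] by blast
  let ?S = "\<lambda>A. {k. sh A k \<in> w}"
  have "{A. ?S A \<in> q} \<in> betaZ_set"
  proof (rule ultraI)
    show "{} \<notin> {A. ?S A \<in> q}" using e3 ultra_empty[OF q] by simp
    show "UNIV \<in> {A. ?S A \<in> q}" using e4 ultra_UNIV[OF q] by simp
    show "A \<inter> B \<in> {A. ?S A \<in> q}" if "A \<in> {A. ?S A \<in> q}" "B \<in> {A. ?S A \<in> q}" for A B
      using that e1[of A B] ultra_int[OF q] by simp
    show "B \<in> {A. ?S A \<in> q}" if "A \<in> {A. ?S A \<in> q}" "A \<subseteq> B" for A B
      using that e5[of A B] ultra_mono[OF q] by blast
    show "- A \<in> {A. ?S A \<in> q}" if "A \<notin> {A. ?S A \<in> q}" for A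
      using that e2[of A] ultra_compl[OF q] by simp
  qed
  then show ?thesis using q by (simp add: Pw_def)
qed

lemma Pw_pr: "Pw w (pr k) = act k w"
  using pr_in by (auto simp: Pw_def pr_def act_def sh_def)

lemma Pw_cont: assumes w: "w \<in> betaZ_set" shows "continuous_map betaZ betaZ (Pw w)"
proof (rule cont_betaZI)
  fix A
  have "{q \<in> betaZ_set. A \<in> Pw w q} = basic {k. sh A k \<in> w}"
    by (auto simp: basic_def Pw_def)
  then show "openin betaZ {q \<in> betaZ_set. A \<in> Pw w q}" using open_basic by simp
qed (rule Pw_in[OF w])

lemma p_om_eq: assumes w: "w \<in> betaZ_set" shows "p_om w = Pw w"
  unfolding p_om_def
proof (rule the_equality)
  show "continuous_map betaZ betaZ (Pw w) \<and> (\<forall>k. Pw w (pr k) = act k w) \<and>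
    (\<forall>q. q \<notin> betaZ_set \<longrightarrow> Pw w q = undefined)"
    using Pw_cont[OF w] Pw_pr by (auto simp: Pw_def)
next
  fix g assume g: "continuous_map betaZ betaZ g \<and> (\<forall>k. g (pr k) = act k w) \<and>
    (\<forall>q. q \<notin> betaZ_set \<longrightarrow> g q = undefined)"
  show "g = Pw w"
  proof
    fix q show "g q = Pw w q"
    proof (cases "q \<in> betaZ_set")
      case True
      then show ?thesis using density[OF Hausdorff_betaZ, of g "Pw w"] g Pw_cont[OF w] Pw_pr
        by auto
    next
      case False then show ?thesis using g by (auto simp: Pw_def)
    qed
  qed
qed

lemma Pw_act: assumes q: "q \<in> betaZ_set" shows "Pw w (act m q) = act m (Pw w q)"
proof -
  have "sh ((\<lambda>k. k + m) -` A) k = sh A (k + m)" for A k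
    by (auto simp: sh_def add.assoc)
  then show ?thesis using q act_in[OF q]
    by (auto simp: Pw_def act_def)
qed

lemma Pw_assoc:
  assumes w: "w \<in> betaZ_set" and q: "q \<in> betaZ_set"
  shows "Pw w (Pw w q) = Pw (Pw w w) q"
proof -
  have e: "sh {k. sh A k \<in> w} l = {k. sh (sh A l) k \<in> w}" for A l
  proof -
    have "sh (sh A l) k = sh A (k + l)" for k by (auto simp: sh_def add.assoc)
    then show ?thesis by (auto simp: sh_def)
  qed
  show ?thesis using Pw_in[OF w q] w q
    by (simp add: Pw_def e)
qed



lemma ultra_Inter:
  assumes q: "q \<in> betaZ_set" and fin: "finite C"
  shows "(\<forall>z\<in>C. X z \<in> q) \<Longrightarrow> (\<Inter>z\<in>C. X z) \<in> q"
  using fin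
proof (induction C rule: finite_induct)
  case empty then show ?case using ultra_UNIV[OF q] by simp
next
  case (insert x F) then show ?case using ultra_int[OF q] by simp
qed

lemma ulim_ex:
  fixes a :: "int \<Rightarrow> 'a::metric_space"
  assumes q: "q \<in> betaZ_set" and K: "compact K" "\<And>n. a n \<in> K"
  shows "\<exists>z. \<forall>e>0. {n. dist (a n) z < e} \<in> q"
proof (rule ccontr)
  assume "\<not> ?thesis"
  then have "\<forall>z. \<exists>e>0. {n. dist (a n) z < e} \<notin> q" by blast
  then obtain e where e: "\<And>z. e z > 0" "\<And>z. {n. dist (a n) z < e z} \<notin> q" by metis
  have cover: "K \<subseteq> (\<Union>z\<in>K. ball z (e z))"
  proof
    fix x assume "x \<in> K"
    then show "x \<in> (\<Union>z\<in>K. ball z (e z))" using e(1)[of x] by (intro UN_I[of x]) auto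
  qed
  obtain C where C: "C \<subseteq> K" "finite C" "K \<subseteq> (\<Union>z\<in>C. ball z (e z))"
    apply (rule compactE_image[OF K(1), of K "\<lambda>z. ball z (e z)"])
      apply simp
     apply (rule cover)
    by blast
  have "\<forall>z\<in>C. - {n. dist (a n) z < e z} \<in> q" using e(2) ultra_compl[OF q] by blast
  then have "(\<Inter>z\<in>C. - {n. dist (a n) z < e z}) \<in> q"
    by (rule ultra_Inter[OF q C(2)])
  moreover have "(\<Inter>z\<in>C. - {n. dist (a n) z < e z}) = {}"
  proof -
    have "\<exists>z\<in>C. dist (a n) z < e z" for n
    proof -
      obtain z where "z \<in> C" "a n \<in> ball z (e z)" using C(3) K(2)[of n] by blast
      then show ?thesis by (auto simp: dist_commute)
    qed
    then show ?thesis by blast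
  qed
  ultimately show False using ultra_empty[OF q] by simp
qed

definition ulim :: "(int \<Rightarrow> 'a::metric_space) \<Rightarrow> int set set \<Rightarrow> 'a" where
  "ulim a q = (SOME z. \<forall>e>0. {n. dist (a n) z < e} \<in> q)"

lemma ulim_prop:
  fixes a :: "int \<Rightarrow> 'a::metric_space"
  assumes q: "q \<in> betaZ_set" and K: "compact K" "\<And>n. a n \<in> K"
  shows "e > 0 \<Longrightarrow> {n. dist (a n) (ulim a q) < e} \<in> q"
proof -
  have "\<exists>z. \<forall>e>0. {n. dist (a n) z < e} \<in> q" by (rule ulim_ex[where a=a, OF q K])
  then have "\<forall>e>0. {n. dist (a n) (ulim a q) < e} \<in> q" unfolding ulim_def by (rule someI_ex)
  then show "e > 0 \<Longrightarrow> {n. dist (a n) (ulim a q) < e} \<in> q" by blast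
qed

lemma ulim_pr:
  fixes a :: "int \<Rightarrow> 'a::metric_space"
  assumes K: "compact K" "\<And>n. a n \<in> K"
  shows "ulim a (pr k) = a k"
proof -
  have "dist (a k) (ulim a (pr k)) < e" if "e > 0" for e
    using ulim_prop[where a=a, OF pr_in K that, of k] by (simp add: pr_def)
  then show ?thesis
    by (metis dist_nz order_less_irrefl)
qed

lemma ulim_cont:
  fixes a :: "int \<Rightarrow> 'a::metric_space"
  assumes K: "compact K" "\<And>n. a n \<in> K"
  shows "continuous_map betaZ euclidean (ulim a)"
  unfolding continuous_map_def
proof (intro conjI allI impI)
  show "ulim a \<in> topspace betaZ \<rightarrow> topspace euclidean" by simp
  fix U :: "'a set" assume "openin euclidean U"
  then have U: "open U" by simp
  show "openin betaZ {x \<in> topspace betaZ. ulim a x \<in> U}"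
  proof (rule open_betaZI)
    show "{x \<in> topspace betaZ. ulim a x \<in> U} \<subseteq> betaZ_set" by auto
  next
    fix q assume "q \<in> {x \<in> topspace betaZ. ulim a x \<in> U}"
    then have q: "q \<in> betaZ_set" "ulim a q \<in> U" by auto
    then obtain e where e: "e > 0" "ball (ulim a q) e \<subseteq> U" using U openE by blast
    define B where "B = {n. dist (a n) (ulim a q) < e/2}"
    have "B \<in> q" unfolding B_def using ulim_prop[where a=a, OF q(1) K, of "e/2"] e by simp
    moreover have "basic B \<subseteq> {x \<in> topspace betaZ. ulim a x \<in> U}"
    proof
      fix q' assume "q' \<in> basic B"
      then have q': "q' \<in> betaZ_set" "B \<in> q'" by (auto simp: basic_def)
      have "{n. dist (a n) (ulim a q') < e/2} \<in> q'" using ulim_prop[where a=a, OF q'(1) K, of "e/2"] e by simp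
      then have "B \<inter> {n. dist (a n) (ulim a q') < e/2} \<in> q'" using ultra_int[OF q'(1) q'(2)] by simp
      then obtain n where "n \<in> B" "dist (a n) (ulim a q') < e/2" using ultra_ne[OF q'(1)] by blast
      then have "dist (ulim a q) (ulim a q') < e" unfolding B_def
        using dist_triangle[of "ulim a q" "ulim a q'" "a n"] dist_commute[of "a n" "ulim a q"]
        by simp
      then show "q' \<in> {x \<in> topspace betaZ. ulim a x \<in> U}" using e q' by auto
    qed
    ultimately show "\<exists>B\<in>q. basic B \<subseteq> {x \<in> topspace betaZ. ulim a x \<in> U}" by blast
  qed
qed

lemma xhat_char:
  fixes l :: complex
  assumes l: "norm l = 1"
  shows "continuous_map betaZ euclidean (xhat l)" "\<And>n. xhat l (pr n) = l powi n"
proof -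
  define a where "a = (\<lambda>n::int. l powi n)"
  have K: "compact (cball (0::complex) 1)" "\<And>n. a n \<in> cball 0 1"
    using l by (auto simp: a_def norm_power_int)
  define f where "f q = (if q \<in> betaZ_set then ulim a q else 0)" for q
  have fc: "continuous_map betaZ euclidean f"
    using ulim_cont[where a=a, OF K] by (rule continuous_map_eq) (auto simp: f_def)
  have fp: "f (pr n) = l powi n" for n using ulim_pr[where a=a, OF K, of n] pr_in[of n] by (simp add: f_def a_def)
  have "xhat l = f"
    unfolding xhat_def
  proof (rule the_equality)
    show "continuous_map betaZ euclidean f \<and> (\<forall>n. f (pr n) = l powi n) \<and> (\<forall>q. q \<notin> betaZ_set \<longrightarrow> f q = 0)"
      using fc fp by (auto simp: f_def)
  next
    fix g assume g: "continuous_map betaZ euclidean g \<and> (\<forall>n. g (pr n) = l powi n) \<and> (\<forall>q. q \<notin> betaZ_set \<longrightarrow> g q = 0)"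
    show "g = f"
    proof
      fix q show "g q = f q"
        using density[of euclidean g f] g fc fp by (cases "q \<in> betaZ_set") (auto simp: f_def)
    qed
  qed
  then show "continuous_map betaZ euclidean (xhat l)" "\<And>n. xhat l (pr n) = l powi n"
    using fc fp by auto
qed



lemma cm_cmult:
  fixes f :: "_ \<Rightarrow> complex"
  shows "continuous_map X euclidean f \<Longrightarrow> continuous_map X euclidean (\<lambda>x. c * f x)"
  by (simp add: continuous_map_atin tendsto_mult)

lemma act0: "act 0 q = q" by (simp add: act_def)

lemma single_pr: assumes q: "q \<in> betaZ_set" and k: "{k} \<in> q" shows "q = pr k"
proof -
  have "A \<in> q \<longleftrightarrow> k \<in> A" for A
  proof
    assume "A \<in> q"
    then have "A \<inter> {k} \<in> q" using ultra_int[OF q _ k] by simp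
    then show "k \<in> A" using ultra_empty[OF q] by (cases "k \<in> A") auto
  next
    assume "k \<in> A" then show "A \<in> q" using ultra_mono[OF q k] by simp
  qed
  then show ?thesis by (auto simp: pr_def)
qed

lemma xhat_props:
  fixes l :: complex
  assumes l: "norm l = 1" and q: "q \<in> betaZ_set"
  shows "xhat l (act k q) = l powi k * xhat l q" "norm (xhat l q) = 1"
proof -
  note X = xhat_char[OF l]
  have l0: "l \<noteq> 0" using l by auto
  show "xhat l (act k q) = l powi k * xhat l q"
    apply (rule density[OF Hausdorff_space_euclidean _ _ _ q, of "xhat l \<circ> act k" "\<lambda>q. l powi k * xhat l q", simplified])
      apply (rule continuous_map_compose[OF act_cont X(1)])
     apply (rule cm_cmult[OF X(1)])
    using l0 by (simp add: act_pr X(2) power_int_add mult.commute)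
  show "norm (xhat l q) = 1"
    apply (rule density[OF Hausdorff_space_euclidean _ _ _ q, of "\<lambda>q. norm (xhat l q)" "\<lambda>q. 1", simplified])
     apply (rule continuous_map_norm[OF X(1)])
    using l by (simp add: X(2) norm_power_int)
qed

lemma xhat_P:
  fixes l :: complex
  assumes l: "norm l = 1" and w: "w \<in> betaZ_set" and q: "q \<in> betaZ_set"
  shows "xhat l (Pw w q) = xhat l w * xhat l q"
proof -
  note X = xhat_char[OF l]
  show ?thesis
    apply (rule density[OF Hausdorff_space_euclidean _ _ _ q, of "xhat l \<circ> Pw w" "\<lambda>q. xhat l w * xhat l q", simplified])
      apply (rule continuous_map_compose[OF Pw_cont[OF w] X(1)])
     apply (rule cm_cmult[OF X(1)])
    using xhat_props(1)[OF l w] by (simp add: Pw_pr X(2) mult.commute)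
qed

lemma ind_cont: "continuous_map betaZ euclidean (\<lambda>q. if {0::int} \<in> q then (1::complex) else 0)"
  unfolding continuous_map_def
proof (intro conjI allI impI)
  show "(\<lambda>q. if {0::int} \<in> q then (1::complex) else 0) \<in> topspace betaZ \<rightarrow> topspace euclidean" by simp
  fix U :: "complex set" assume "openin euclidean U"
  let ?W = "{x \<in> topspace betaZ. (if {0::int} \<in> x then (1::complex) else 0) \<in> U}"
  show "openin betaZ ?W"
  proof (rule open_betaZI)
    show "?W \<subseteq> betaZ_set" by auto
  next
    fix q assume qW: "q \<in> ?W"
    then have q: "q \<in> betaZ_set" by simp
    show "\<exists>B\<in>q. basic B \<subseteq> ?W"
    proof (cases "{0} \<in> q")
      case True
      then show ?thesis using qW by (intro bexI[of _ "{0}"]) (auto simp: basic_def)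
    next
      case False
      then have "- {0} \<in> q" using ultra_compl[OF q] by simp
      moreover have "basic (- {0}) \<subseteq> ?W"
        using qW False ultra_compl by (auto simp: basic_def)
      ultimately show ?thesis by blast
    qed
  qed
qed

theorem theorem2p13:
  fixes \<omega> :: "int set set"
  assumes "\<omega> \<in> corona" and "\<omega> \<star> \<omega> = \<omega>"
  defines "\<pi> \<equiv> (\<lambda>f. f \<circ> p_om \<omega>)"
  shows "Z_retraction (p_om \<omega>) (p_om \<omega> ` betaZ_set)
    \<and> p_om \<omega> ` betaZ_set \<subset> betaZ_set
    \<and> (\<forall>f\<in>CbZ. \<pi> f \<in> CbZ)
    \<and> (\<forall>f\<in>CbZ. \<forall>m. \<forall>q\<in>betaZ_set. \<pi> (\<lambda>x. f (act m x)) q = \<pi> f (act m q))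
    \<and> (\<forall>f\<in>CbZ. \<forall>g\<in>CbZ. \<forall>a b. \<forall>q\<in>betaZ_set.
          \<pi> (\<lambda>x. a * f x + b * g x) q = a * \<pi> f q + b * \<pi> g q)
    \<and> (\<forall>f\<in>CbZ. \<forall>g\<in>CbZ. \<forall>q\<in>betaZ_set. \<pi> (\<lambda>x. f x * g x) q = \<pi> f q * \<pi> g q)
    \<and> (\<forall>f\<in>CbZ. \<forall>q\<in>betaZ_set. \<pi> (\<lambda>x. cnj (f x)) q = cnj (\<pi> f q))
    \<and> (\<forall>q\<in>betaZ_set. \<pi> (\<lambda>x. 1) q = 1)
    \<and> (\<forall>f\<in>CbZ. \<forall>q\<in>betaZ_set. \<pi> (\<pi> f) q = \<pi> f q)
    \<and> (\<exists>g\<in>CbZ. \<not> (\<exists>f\<in>CbZ. \<forall>q\<in>betaZ_set. g q = \<pi> f q))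
    \<and> sigma_map \<pi> = sphere 0 1"
proof -
  have w: "\<omega> \<in> betaZ_set" and wnp: "\<omega> \<notin> range pr" using assms(1) by (auto simp: corona_def)
  have peq: "p_om \<omega> = Pw \<omega>" by (rule p_om_eq[OF w])
  have ww: "Pw \<omega> \<omega> = \<omega>" using assms(2) by (simp add: star_def peq)
  have pin: "\<And>q. q \<in> betaZ_set \<Longrightarrow> Pw \<omega> q \<in> betaZ_set" by (rule Pw_in[OF w])
  have idem: "\<And>q. q \<in> betaZ_set \<Longrightarrow> Pw \<omega> (Pw \<omega> q) = Pw \<omega> q"
    using Pw_assoc[OF w] ww by simp
  have Yeq: "Pw \<omega> ` betaZ_set = {q \<in> topspace betaZ. Pw \<omega> q = id q}"
    using idem pin by (auto intro: image_eqI[of _ _ "Pw \<omega> _"])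
  have pc: "continuous_map betaZ betaZ (Pw \<omega>)" by (rule Pw_cont[OF w])
  have closed: "closedin betaZ (Pw \<omega> ` betaZ_set)"
    unfolding Yeq by (rule closedin_continuous_maps_eq[OF Hausdorff_betaZ pc continuous_map_id])
  have R: "Z_retraction (Pw \<omega>) (Pw \<omega> ` betaZ_set)"
    unfolding Z_retraction_def
  proof (intro conjI allI ballI)
    show "Pw \<omega> ` betaZ_set \<subseteq> betaZ_set" using pin by auto
    show "closedin betaZ (Pw \<omega> ` betaZ_set)" by (rule closed)
    show "act m ` Pw \<omega> ` betaZ_set \<subseteq> Pw \<omega> ` betaZ_set" for m
      using Pw_act act_in by (auto intro!: image_eqI)
    show "continuous_map betaZ (subtopology betaZ (Pw \<omega> ` betaZ_set)) (Pw \<omega>)"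
      by (rule continuous_map_into_subtopology[OF pc]) simp
    show "Pw \<omega> ` betaZ_set = Pw \<omega> ` betaZ_set" ..
    show "Pw \<omega> (act m q) = act m (Pw \<omega> q)" if "q \<in> betaZ_set" for m q using Pw_act[OF that] .
    show "Pw \<omega> y = y" if "y \<in> Pw \<omega> ` betaZ_set" for y using that idem by auto
  qed
  have pr0: "Pw \<omega> (pr 0) = \<omega>" by (simp add: Pw_pr act0)
  have proper: "Pw \<omega> ` betaZ_set \<subset> betaZ_set"
  proof -
    have "pr 0 \<notin> Pw \<omega> ` betaZ_set"
    proof
      assume "pr 0 \<in> Pw \<omega> ` betaZ_set"
      then have "Pw \<omega> (pr 0) = pr 0" using idem by auto
      then show False using pr0 wnp by auto
    qed
    then show ?thesis using pin pr_in by blast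
  qed
  have piq: "\<pi> f q = f (Pw \<omega> q)" for f q by (simp add: \<pi>_def peq)
  have nons: "\<exists>g\<in>CbZ. \<not> (\<exists>f\<in>CbZ. \<forall>q\<in>betaZ_set. g q = \<pi> f q)"
  proof (intro bexI[of _ "\<lambda>q. if {0::int} \<in> q then (1::complex) else 0"] notI)
    show "(\<lambda>q. if {0::int} \<in> q then (1::complex) else 0) \<in> CbZ" using ind_cont by (simp add: CbZ_def)
    assume "\<exists>f\<in>CbZ. \<forall>q\<in>betaZ_set. (if {0::int} \<in> q then (1::complex) else 0) = \<pi> f q"
    then obtain f where f: "\<forall>q\<in>betaZ_set. (if {0::int} \<in> q then (1::complex) else 0) = \<pi> f q" by blast
    have "{0} \<in> pr 0" by (simp add: pr_def)
    have "{0} \<notin> \<omega>" using single_pr[OF w] wnp by blast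
    then show False using f[rule_format, OF pr_in[of 0]] f[rule_format, OF w]
      by (simp add: piq pr0 ww \<open>{0} \<in> pr 0\<close>)
  qed
  have sig: "sigma_map \<pi> = sphere 0 1"
  proof
    show "sigma_map \<pi> \<subseteq> sphere 0 1" by (auto simp: sigma_map_def)
    show "sphere 0 1 \<subseteq> sigma_map \<pi>"
    proof
      fix l :: complex assume "l \<in> sphere 0 1"
      then have l: "norm l = 1" by simp
      have "xhat l \<omega> \<noteq> 0" using xhat_props(2)[OF l w] by auto
      moreover have "\<forall>q\<in>betaZ_set. \<pi> (xhat l) q = xhat l \<omega> * xhat l q"
        using xhat_P[OF l w] by (simp add: piq)
      ultimately show "l \<in> sigma_map \<pi>" using l unfolding sigma_map_def by blast
    qed
  qed
  show ?thesis
    unfolding peq[symmetric]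
    using R proper nons sig idem
    apply (simp only: peq)
    apply (intro conjI)
    apply (simp_all add: CbZ_def piq Pw_act)
    using continuous_map_compose[OF pc] unfolding \<pi>_def peq by (auto simp: o_def)
qed

end
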